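(* Let $n\geq 1$, let $H$ be an irreducible subgroup of $SL(n,\mathbb{C})$, let $u\in U_n(H)$ and suppose $\pi_n(u)$ has order $d$ in $Z_n(H)$. Then $u$ is conjugate in $SL(n,\mathbb{C})$ to the block diagonal matrix $$\lambda\,\mathrm{diag}\big(I_{n/d},\ \xi^{n/d}I_{n/d},\ \xi^{2n/d}I_{n/d},\dots,\ \xi^{(n/d)(d-1)}I_{n/d}\big)$$ for some $\lambda\in\mathbb{C}^*$, where $\lambda\in\langle\xi\rangle$ if $d$ is odd or if $d$ and $n/d$ are both even, and $\lambda\in \mu\langle \xi\rangle$ where $\mu$ is a square root of $\xi^{-(n/d)(d-1)}$ if $d$ is even and $n/d$ is odd.
   Context: Let $\xi=e^{2\pi i/n}$; the center of $SL(n,\mathbb{C})$ is $\langle \xi I_n\rangle$. $\pi_n:SL(n,\mathbb{C})\to PSL(n,\mathbb{C})=SL(n,\mathbb{C})/\langle \xi I_n\rangle$ is the quotient map. A subgroup $H\le SL(n,\mathbb{C})$ is irreducible if no nonzero proper subspace of $\mathbb{C}^n$ is $H$-invariant. $Z_n(H)$ is the centralizer of $\pi_n(H)$ in $PSL(n,\mathbb{C})$, and $U_n(H)=\pi_n^{-1}(Z_n(H))=\{g\in SL(n,\mathbb{C}) : [g,h]\in\langle\xi I_n\rangle \text{ for all } h\in H\}$, where $[g,h]=ghg^{-1}h^{-1}$. *)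

theory Defs
  imports "Jordan_Normal_Form.Determinant" Complex_Main
begin

definition xi :: "nat \<Rightarrow> complex" where
  "xi n = exp (2 * pi * \<i> / of_nat n)"

definition SL :: "nat \<Rightarrow> complex mat set" where
  "SL n = {A \<in> carrier_mat n n. det A = 1}"

text \<open>Two-sided inverse of a square matrix (meaningful for invertible matrices).\<close>
definition minv :: "complex mat \<Rightarrow> complex mat" where
  "minv A = (SOME B. B \<in> carrier_mat (dim_row A) (dim_row A) \<and>
                     A * B = 1\<^sub>m (dim_row A) \<and> B * A = 1\<^sub>m (dim_row A))"

definition commutator :: "complex mat \<Rightarrow> complex mat \<Rightarrow> complex mat" where
  "commutator g h = g * h * minv g * minv h"

definition centre_SL :: "nat \<Rightarrow> complex mat set" where
  "centre_SL n = {xi n ^ k \<cdot>\<^sub>m 1\<^sub>m n | k. True}"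

definition subgroup_SL :: "nat \<Rightarrow> complex mat set \<Rightarrow> bool" where
  "subgroup_SL n H \<longleftrightarrow> H \<subseteq> SL n \<and> 1\<^sub>m n \<in> H \<and>
     (\<forall>A\<in>H. \<forall>B\<in>H. A * B \<in> H) \<and> (\<forall>A\<in>H. minv A \<in> H)"

definition subspace_vec :: "nat \<Rightarrow> complex vec set \<Rightarrow> bool" where
  "subspace_vec n W \<longleftrightarrow> W \<subseteq> carrier_vec n \<and> 0\<^sub>v n \<in> W \<and>
     (\<forall>v\<in>W. \<forall>w\<in>W. v + w \<in> W) \<and> (\<forall>c. \<forall>v\<in>W. c \<cdot>\<^sub>v v \<in> W)"

definition irreducible_SL :: "nat \<Rightarrow> complex mat set \<Rightarrow> bool" where
  "irreducible_SL n H \<longleftrightarrow>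
     \<not> (\<exists>W. subspace_vec n W \<and> W \<noteq> {0\<^sub>v n} \<and> W \<noteq> carrier_vec n \<and>
            (\<forall>h\<in>H. \<forall>w\<in>W. h *\<^sub>v w \<in> W))"

text \<open>U_n(H) = preimage of the centralizer of pi_n(H) in PSL(n,C).\<close>
definition U :: "nat \<Rightarrow> complex mat set \<Rightarrow> complex mat set" where
  "U n H = {g \<in> SL n. \<forall>h\<in>H. commutator g h \<in> centre_SL n}"

text \<open>pi_n(u) has order d (in PSL(n,C), equivalently in the subgroup Z_n(H)).\<close>
definition proj_order :: "nat \<Rightarrow> complex mat \<Rightarrow> nat \<Rightarrow> bool" where
  "proj_order n u d \<longleftrightarrow> d > 0 \<and> u ^\<^sub>m d \<in> centre_SL n \<and>
     (\<forall>e. 0 < e \<and> e < d \<longrightarrow> u ^\<^sub>m e \<notin> centre_SL n)"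

text \<open>diag(I_{n/d}, xi^{n/d} I_{n/d}, ..., xi^{(n/d)(d-1)} I_{n/d}).\<close>
definition block_diag_roots :: "nat \<Rightarrow> nat \<Rightarrow> complex mat" where
  "block_diag_roots n d = mat n n (\<lambda>(i,j). if i = j then xi n ^ ((n div d) * (i div (n div d))) else 0)"

end

theory Submission
  imports Defs "Jordan_Normal_Form.Jordan_Normal_Form_Existence" "Jordan_Normal_Form.Spectral_Radius"
begin
lemma xi_pow: "xi n ^ j = exp (2 * of_real pi * \<i> * of_nat j / of_nat n)"
  unfolding xi_def by (simp add: exp_of_nat_mult[symmetric] algebra_simps)

lemma xi_root: assumes "N \<ge> 1" "z ^ N = (1::complex)" shows "\<exists>j<N. z = xi N ^ j"
proof -
  have "z \<in> {z::complex. z^N = 1}" using assms by simp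
  then obtain j where j: "j < N" "z = cis (2 * pi * real j / real N)"
    using bij_betw_roots_unity[of N] assms(1) unfolding bij_betw_def by auto
  have "z = exp (2 * of_real pi * \<i> * of_nat j / of_nat N)"
    unfolding j cis_conv_exp by (simp add: algebra_simps)
  with j show ?thesis unfolding xi_pow by auto
qed

lemma xi_pow_n: "n \<ge> 1 \<Longrightarrow> xi n ^ n = 1"
  unfolding xi_pow by simp

lemma xi_nonzero[simp]: "xi n \<noteq> 0" unfolding xi_def by simp

lemma inv_exists: assumes A: "A \<in> carrier_mat n n" and d: "det A \<noteq> (0::complex)"
  shows "\<exists>B\<in>carrier_mat n n. A * B = 1\<^sub>m n \<and> B * A = 1\<^sub>m n"
proof -
  from det_non_zero_imp_unit[OF A d, of undefined] show ?thesis
    unfolding Units_def ring_mat_def by auto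
qed

lemma minv_eq: assumes A: "A \<in> carrier_mat n n" and B: "B \<in> carrier_mat n n" and AB: "A * B = 1\<^sub>m n"
  shows "minv A = (B::complex mat)"
proof -
  have BA: "B * A = 1\<^sub>m n" by (rule mat_mult_left_right_inverse[OF A B AB])
  have dr: "dim_row A = n" using A by simp
  let ?P = "\<lambda>B'. B' \<in> carrier_mat n n \<and> A * B' = 1\<^sub>m n \<and> B' * A = 1\<^sub>m n"
  have "?P (minv A)" unfolding minv_def dr by (rule someI[of ?P B], insert B AB BA, auto)
  then have C: "minv A \<in> carrier_mat n n" and CA: "minv A * A = 1\<^sub>m n" by auto
  have "minv A = minv A * (A * B)" using C AB by simp
  also have "\<dots> = (minv A * A) * B" using C A B by (simp add: assoc_mult_mat)
  also have "\<dots> = B" using CA B by simp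
  finally show ?thesis .
qed

lemma minv_props: assumes A: "A \<in> carrier_mat n n" and d: "det A \<noteq> (0::complex)"
  shows "minv A \<in> carrier_mat n n" "A * minv A = 1\<^sub>m n" "minv A * A = 1\<^sub>m n"
proof -
  from inv_exists[OF A d] obtain B where B: "B \<in> carrier_mat n n" "A * B = 1\<^sub>m n" "B * A = 1\<^sub>m n" by auto
  with minv_eq[OF A B(1) B(2)] show "minv A \<in> carrier_mat n n" "A * minv A = 1\<^sub>m n" "minv A * A = 1\<^sub>m n" by auto
qed
lemma cancel_left: assumes A: "A \<in> carrier_mat n n" and B: "B \<in> carrier_mat n n" and C: "C \<in> carrier_mat n m" and AB: "A * B = 1\<^sub>m n"
  shows "A * (B * C) = (C::complex mat)"
  using assoc_mult_mat[OF A B C, symmetric] AB left_mult_one_mat[OF C] by simp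

lemma cancel_right: assumes A: "A \<in> carrier_mat n n" and B: "B \<in> carrier_mat n n" and C: "C \<in> carrier_mat m n" and AB: "A * B = 1\<^sub>m n"
  shows "C * A * B = (C::complex mat)"
  using assoc_mult_mat[OF C A B] AB right_mult_one_mat[OF C] by simp

lemma comm_rel: assumes g: "g \<in> carrier_mat n n" and h: "h \<in> carrier_mat n n"
  and dg: "det g \<noteq> 0" and dh: "det h \<noteq> 0" and c: "commutator g h = c \<cdot>\<^sub>m 1\<^sub>m n"
  shows "g * h = c \<cdot>\<^sub>m (h * g)"
proof -
  note gi = minv_props[OF g dg] and hi = minv_props[OF h dh]
  have X: "g * h * minv g \<in> carrier_mat n n" using g h gi by auto
  have "commutator g h * h * g = g * h * minv g * minv h * h * g"
    unfolding commutator_def by simp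
  also have "g * h * minv g * minv h * h = g * h * minv g"
    by (rule cancel_right[OF hi(1) h X hi(3)])
  also have "g * h * minv g * g = g * h" 
    by (rule cancel_right[OF gi(1) g _ gi(3)], insert g h, auto)
  finally have "g * h = commutator g h * h * g" by simp
  also have "\<dots> = c \<cdot>\<^sub>m (h * g)" unfolding c using g h
    by (simp add: mult_smult_assoc_mat[of _ n n _ n])
  finally show ?thesis .
qed
definition diagm :: "complex list \<Rightarrow> complex mat" where
  "diagm xs = mat (length xs) (length xs) (\<lambda>(i,j). if i = j then xs!i else 0)"

lemma jm_diag: "\<forall>p\<in>set n_as. fst p = 1 \<Longrightarrow> jordan_matrix n_as = diagm (map snd n_as)"
proof (induct n_as)
  case Nil
  then show ?case unfolding diagm_def jordan_matrix_def by (intro eq_matI, auto)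
next
  case (Cons p rest)
  obtain k a where p: "p = (k,a)" by force
  with Cons have k: "k = 1" by auto
  have IH: "jordan_matrix rest = diagm (map snd rest)" using Cons by auto
  have sl: "sum_list (map fst rest) = length rest" using Cons(2)
    by (induct rest, auto)
  show ?case unfolding p k jordan_matrix_Cons IH sl
    by (intro eq_matI, auto simp: diagm_def nth_Cons' jordan_block_def)
qed

lemma jm_pow: assumes "jordan_matrix n_as ^\<^sub>m d = s \<cdot>\<^sub>m 1\<^sub>m (sum_list (map fst n_as))"
  and s: "s \<noteq> (0::complex)" and d: "d > 0"
  shows "\<forall>(k,a)\<in>set n_as. k = 0 \<or> (k = 1 \<and> a ^ d = s)"
  using assms(1)
proof (induct n_as)
  case Nil
  then show ?case by simp
next
  case (Cons p rest)
  obtain k a where p: "p = (k,a)" by force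
  let ?N = "sum_list (map fst rest)"
  have J: "jordan_matrix (p # rest) ^\<^sub>m d = four_block_mat (jordan_block k a ^\<^sub>m d) (0\<^sub>m k ?N) (0\<^sub>m ?N k) (jordan_matrix rest ^\<^sub>m d)"
    unfolding p jordan_matrix_Cons by (rule pow_four_block_mat, auto)
  have eq: "four_block_mat (jordan_block k a ^\<^sub>m d) (0\<^sub>m k ?N) (0\<^sub>m ?N k) (jordan_matrix rest ^\<^sub>m d) = s \<cdot>\<^sub>m 1\<^sub>m (k + ?N)"
    using Cons(2) J p by simp
  have dj[simp]: "dim_col (jordan_block k a) = k" "dim_row (jordan_block k a) = k" by (auto simp: jordan_block_def)
  have blk: "\<And>i j. i < k \<Longrightarrow> j < k \<Longrightarrow> (jordan_block k a ^\<^sub>m d) $$ (i,j) = (if i = j then s else 0)"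
  proof -
    fix i j assume ij: "i < k" "j < k"
    have "(jordan_block k a ^\<^sub>m d) $$ (i,j) = four_block_mat (jordan_block k a ^\<^sub>m d) (0\<^sub>m k ?N) (0\<^sub>m ?N k) (jordan_matrix rest ^\<^sub>m d) $$ (i,j)"
      using ij by (subst index_mat_four_block, auto)
    also have "\<dots> = (s \<cdot>\<^sub>m 1\<^sub>m (k + ?N)) $$ (i,j)" unfolding eq ..
    finally show "(jordan_block k a ^\<^sub>m d) $$ (i,j) = (if i = j then s else 0)"
      using ij by simp
  qed
  have rest: "jordan_matrix rest ^\<^sub>m d = s \<cdot>\<^sub>m 1\<^sub>m ?N"
  proof (rule eq_matI)
    fix i j assume ij: "i < dim_row (s \<cdot>\<^sub>m 1\<^sub>m ?N)" "j < dim_col (s \<cdot>\<^sub>m 1\<^sub>m ?N)"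
    have "(jordan_matrix rest ^\<^sub>m d) $$ (i,j) = four_block_mat (jordan_block k a ^\<^sub>m d) (0\<^sub>m k ?N) (0\<^sub>m ?N k) (jordan_matrix rest ^\<^sub>m d) $$ (k+i,k+j)"
      using ij by (subst index_mat_four_block, auto)
    also have "\<dots> = (s \<cdot>\<^sub>m 1\<^sub>m (k + ?N)) $$ (k+i,k+j)" unfolding eq ..
    finally show "(jordan_matrix rest ^\<^sub>m d) $$ (i,j) = (s \<cdot>\<^sub>m 1\<^sub>m ?N) $$ (i,j)" using ij by simp
  qed auto
  have hd: "k = 0 \<or> (k = 1 \<and> a ^ d = s)"
  proof (cases "k = 0")
    case False
    have a0: "a ^ d = s" using blk[of 0 0] False unfolding jordan_block_pow by simp
    have "k = 1"
    proof (rule ccontr)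
      assume "k \<noteq> 1"
      with False have "1 < k" by auto
      then have "of_nat (d choose 1) * a ^ (d - 1) = (0::complex)" using blk[of 0 1] unfolding jordan_block_pow by simp
      then have "a = 0" using d by simp
      with a0 s d show False by (simp add: zero_power)
    qed
    with a0 show ?thesis by simp
  qed simp
  from Cons(1)[OF rest] hd p show ?case by auto
qed
lemma diagm_perm: assumes "mset xs = mset ys" shows "similar_mat (diagm xs) (diagm ys)"
proof -
  from mset_eq_permutation[OF assms] obtain p where p: "p permutes {..<length ys}" "permute_list p ys = xs" .
  define N where "N = length ys"
  have lx: "length xs = N" using p(2) N_def by auto
  have pN: "\<And>i. i < N \<Longrightarrow> p i < N" using p(1) N_def by (metis lessThan_iff permutes_in_image)
  have pinj: "\<And>i j. p i = p j \<Longrightarrow> i = j" using p(1) by (meson permutes_inj injD)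
  have xi: "\<And>i. i < N \<Longrightarrow> xs ! i = ys ! p i" using p N_def by (auto simp: permute_list_def)
  define Pm where "Pm = mat N N (\<lambda>(i,j). if p i = j then 1 else (0::complex))"
  define Qm where "Qm = mat N N (\<lambda>(i,j). if p j = i then 1 else (0::complex))"
  have P: "Pm \<in> carrier_mat N N" and Q: "Qm \<in> carrier_mat N N" unfolding Pm_def Qm_def by auto
  have D: "diagm ys \<in> carrier_mat N N" unfolding diagm_def N_def by auto
  have PD: "Pm * diagm ys = mat N N (\<lambda>(i,k). diagm ys $$ (p i, k))"
  proof (rule eq_matI)
    fix i k assume ik: "i < dim_row (mat N N (\<lambda>(i,k). diagm ys $$ (p i, k)))" "k < dim_col (mat N N (\<lambda>(i,k). diagm ys $$ (p i, k)))"
    then have i: "i < N" and k: "k < N" by auto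
    have "(Pm * diagm ys) $$ (i,k) = (\<Sum>l\<in>{0..<N}. (if p i = l then 1 else 0) * diagm ys $$ (l,k))"
      using i k P D unfolding Pm_def by (simp add: scalar_prod_def)
    also have "\<dots> = (\<Sum>l\<in>{0..<N}. if p i = l then diagm ys $$ (l,k) else 0)"
      by (rule sum.cong, auto)
    also have "\<dots> = diagm ys $$ (p i, k)" using pN[OF i] by (simp add: sum.delta)
    finally show "(Pm * diagm ys) $$ (i,k) = mat N N (\<lambda>(i,k). diagm ys $$ (p i, k)) $$ (i,k)" using i k by simp
  qed (insert P D, auto)
  have PDQ: "Pm * diagm ys * Qm = diagm xs"
  proof (rule eq_matI)
    fix i j assume ij: "i < dim_row (diagm xs)" "j < dim_col (diagm xs)"
    then have i: "i < N" and j: "j < N" unfolding diagm_def lx by auto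
    have "(Pm * diagm ys * Qm) $$ (i,j) = (\<Sum>l\<in>{0..<N}. diagm ys $$ (p i, l) * (if p j = l then 1 else 0))"
      unfolding PD using i j unfolding Qm_def by (simp add: scalar_prod_def)
    also have "\<dots> = (\<Sum>l\<in>{0..<N}. if p j = l then diagm ys $$ (p i, l) else 0)"
      by (rule sum.cong, auto)
    also have "\<dots> = diagm ys $$ (p i, p j)" using pN[OF j] by (simp add: sum.delta)
    also have "\<dots> = diagm xs $$ (i,j)" using pN[OF i] pN[OF j] i j pinj[of i j] xi[OF i]
      unfolding diagm_def N_def[symmetric] lx by auto
    finally show "(Pm * diagm ys * Qm) $$ (i,j) = diagm xs $$ (i,j)" .
  qed (insert P D Q, auto simp: diagm_def lx N_def)
  have PQ: "Pm * Qm = 1\<^sub>m N"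
  proof (rule eq_matI)
    fix i j assume ij: "i < dim_row (1\<^sub>m N)" "j < dim_col (1\<^sub>m N)"
    then have i: "i < N" and j: "j < N" by auto
    have "(Pm * Qm) $$ (i,j) = (\<Sum>l\<in>{0..<N}. (if p i = l then 1 else 0) * (if p j = l then 1 else (0::complex)))"
      using i j unfolding Pm_def Qm_def by (simp add: scalar_prod_def)
    also have "\<dots> = (\<Sum>l\<in>{0..<N}. if p i = l then (if p j = l then 1 else 0) else 0)"
      by (rule sum.cong, auto)
    also have "\<dots> = (if p j = p i then 1 else 0)" using pN[OF i] by (simp add: sum.delta)
    also have "\<dots> = 1\<^sub>m N $$ (i,j)" using i j pinj[of i j] by auto
    finally show "(Pm * Qm) $$ (i,j) = 1\<^sub>m N $$ (i,j)" .
  qed (insert P Q, auto)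
  have QP: "Qm * Pm = 1\<^sub>m N" by (rule mat_mult_left_right_inverse[OF P Q PQ])
  show ?thesis
    by (rule similar_matI[where n=N and P=Pm and Q=Qm], insert P Q D PQ QP PDQ, auto simp: diagm_def lx)
qed
lemma schur: assumes n: "n \<ge> 1" and irr: "irreducible_SL n H" and Hc: "H \<subseteq> carrier_mat n n"
  and A: "A \<in> carrier_mat n n" and comm: "\<forall>h\<in>H. A * h = h * A"
  shows "\<exists>a. A = a \<cdot>\<^sub>m 1\<^sub>m n"
proof -
  from spectrum_non_empty[OF A] n obtain a where "a \<in> spectrum A" by auto
  then obtain v where ev: "eigenvector A v a" unfolding spectrum_def eigenvalue_def by auto
  have dA: "dim_row A = n" using A by simp
  from ev have v: "v \<in> carrier_vec n" "v \<noteq> 0\<^sub>v n" "A *\<^sub>v v = a \<cdot>\<^sub>v v" unfolding eigenvector_def dA by auto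
  define W where "W = {w \<in> carrier_vec n. A *\<^sub>v w = a \<cdot>\<^sub>v w}"
  have sub: "subspace_vec n W" unfolding subspace_vec_def
  proof (intro conjI ballI allI)
    show "W \<subseteq> carrier_vec n" unfolding W_def by auto
    show "0\<^sub>v n \<in> W" unfolding W_def using A by auto
  next
    fix x y assume "x \<in> W" "y \<in> W"
    then show "x + y \<in> W" unfolding W_def
      using A by (auto simp: mult_add_distrib_mat_vec[OF A] smult_add_distrib_vec)
  next
    fix c x assume "x \<in> W"
    then show "c \<cdot>\<^sub>v x \<in> W" unfolding W_def
      using A by (auto simp: mult_mat_vec[OF A] smult_smult_assoc mult.commute)
  qed
  have inv: "\<forall>h\<in>H. \<forall>w\<in>W. h *\<^sub>v w \<in> W"
  proof (intro ballI)
    fix h w assume h: "h \<in> H" and w: "w \<in> W"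
    have hc: "h \<in> carrier_mat n n" using h Hc by auto
    have wc: "w \<in> carrier_vec n" and Aw: "A *\<^sub>v w = a \<cdot>\<^sub>v w" using w W_def by auto
    have "A *\<^sub>v (h *\<^sub>v w) = (A * h) *\<^sub>v w" using A hc wc by simp
    also have "\<dots> = (h * A) *\<^sub>v w" using comm h by simp
    also have "\<dots> = h *\<^sub>v (a \<cdot>\<^sub>v w)" using A hc wc Aw by simp
    also have "\<dots> = a \<cdot>\<^sub>v (h *\<^sub>v w)" using hc wc by (simp add: mult_mat_vec)
    finally show "h *\<^sub>v w \<in> W" unfolding W_def using hc wc by simp
  qed
  have "W \<noteq> {0\<^sub>v n}" using v unfolding W_def by auto
  with sub inv irr have Wall: "W = carrier_vec n" unfolding irreducible_SL_def by blast
  have "A = a \<cdot>\<^sub>m 1\<^sub>m n"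
  proof (rule eq_matI)
    fix i j assume ij: "i < dim_row (a \<cdot>\<^sub>m 1\<^sub>m n)" "j < dim_col (a \<cdot>\<^sub>m 1\<^sub>m n)"
    then have i: "i < n" and j: "j < n" by auto
    have "unit_vec n j \<in> W" using Wall by simp
    then have e: "A *\<^sub>v unit_vec n j = a \<cdot>\<^sub>v unit_vec n j" unfolding W_def by simp
    have "A $$ (i,j) = (A *\<^sub>v unit_vec n j) $ i" using A i j by (simp add: scalar_prod_def if_distrib[of "\<lambda>x. _ * x"] sum.delta' cong: if_cong)
    also have "\<dots> = (a \<cdot>\<^sub>m 1\<^sub>m n) $$ (i,j)" unfolding e using i j by simp
    finally show "A $$ (i,j) = (a \<cdot>\<^sub>m 1\<^sub>m n) $$ (i,j)" .
  qed (insert A, auto)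
  then show ?thesis by blast
qed
lemma xi_cis: "xi N ^ b = cis (2 * pi * real b / real N)"
  unfolding xi_pow cis_conv_exp by (simp add: algebra_simps)

lemma xi_inj: assumes "b < N" "c < N" "xi N ^ b = xi N ^ c" shows "b = c"
proof -
  have "N > 0" using assms by auto
  from bij_betw_roots_unity[OF this] have "inj_on (\<lambda>k. cis (2 * pi * real k / real N)) {..<N}"
    unfolding bij_betw_def by auto
  then show ?thesis using assms unfolding xi_cis inj_on_def by auto
qed

lemma count_map_upt: "count (mset (map f [0..<n])) a = card {i\<in>{0..<n}. f i = a}"
proof -
  have "count (mset (map f [0..<n])) a = (\<Sum>y\<in>f -` {a} \<inter> {0..<n}. 1)"
    by (simp add: count_image_mset)
  also have "\<dots> = card (f -` {a} \<inter> {0..<n})" by simp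
  also have "f -` {a} \<inter> {0..<n} = {i\<in>{0..<n}. f i = a}" by auto
  finally show ?thesis .
qed

lemma card_div_block: assumes "b < d" shows "card {i\<in>{0..<q*d}. i div q = b} = q"
proof -
  have "{i\<in>{0..<q*d}. i div q = b} = {b*q..<b*q+q}"
  proof (rule Set.set_eqI, rule iffI)
    fix i assume "i \<in> {i\<in>{0..<q*d}. i div q = b}"
    then have "i div q = b" "i < q * d" by auto
    then show "i \<in> {b*q..<b*q+q}"
      by (metis atLeastLessThan_iff add.commute div_mult_mod_eq mod_less_divisor div_by_0 mult.commute
          add_less_cancel_left le_add1 gr0I mult_0 not_less_zero)
  next
    fix i assume i: "i \<in> {b*q..<b*q+q}"
    then have q: "q > 0" by auto
    have "i div q = b" using i q by (auto simp: div_nat_eqI mult.commute)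
    moreover have "i < q * d" using i assms
      by (metis atLeastLessThan_iff add.commute less_le_trans mult.commute mult_Suc_right mult_le_mono2 Suc_leI)
    ultimately show "i \<in> {i\<in>{0..<q*d}. i div q = b}" by auto
  qed
  then show ?thesis by simp
qed
lemma counting:
  fixes es :: "complex list" and s :: complex and d :: nat
  assumes d: "d > 0" and ne: "es \<noteq> []" and s: "s \<noteq> 0"
    and roots: "\<forall>a\<in>set es. a ^ d = s"
    and rot: "\<forall>a. count_list es (a * xi d) = count_list es a"
  shows "d dvd length es \<and> mset es = mset (map (\<lambda>i. es!0 * xi d ^ (i div (length es div d))) [0..<length es])"
proof -
  define lam where "lam = es ! 0"
  define n where "n = length es"
  define w where "w = xi d"
  have lam_in: "lam \<in> set es" unfolding lam_def using ne by simp
  have lamd: "lam ^ d = s" using roots lam_in by auto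
  have lam0: "lam \<noteq> 0" using lamd s d by (auto simp: zero_power)
  have wd: "w ^ d = 1" unfolding w_def using d xi_pow_n[of d] by simp
  define R where "R = (\<lambda>b. lam * w ^ b) ` {..<d}"
  have inR: "a \<in> R" if "a ^ d = s" for a
  proof -
    have "(a / lam) ^ d = 1" using that lamd lam0 s by (simp add: power_divide)
    from xi_root[OF _ this] d obtain b where "b < d" "a / lam = w ^ b" unfolding w_def by auto
    then show ?thesis unfolding R_def using lam0 by (auto simp: field_simps)
  qed
  have Rroot: "a ^ d = s" if "a \<in> R" for a
  proof -
    from that obtain b where "a = lam * w ^ b" unfolding R_def by auto
    then have "a ^ d = lam ^ d * (w ^ d) ^ b" by (simp add: power_mult_distrib power_mult[symmetric] mult.commute)
    then show ?thesis using lamd wd by simp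
  qed
  have injR: "inj_on (\<lambda>b. lam * w ^ b) {..<d}"
    unfolding inj_on_def w_def using lam0 xi_inj by auto
  have cardR: "card R = d" unfolding R_def using card_image[OF injR] by simp
  have finR: "finite R" unfolding R_def by simp
  have cnt: "count_list es (lam * w ^ b) = count_list es lam" for b
  proof (induct b)
    case (Suc b)
    have "count_list es (lam * w ^ Suc b) = count_list es ((lam * w ^ b) * w)" by (simp add: algebra_simps)
    also have "\<dots> = count_list es (lam * w ^ b)" using rot unfolding w_def by blast
    finally show ?case using Suc by simp
  qed simp
  define M where "M = count_list es lam"
  have cntR: "a \<in> R \<Longrightarrow> count_list es a = M" for a unfolding R_def M_def using cnt by auto
  have M1: "M \<ge> 1" unfolding M_def using lam_in count_list_0_iff[of es lam] by linarith
  have setR: "set es \<subseteq> R" using roots inR by auto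
  have "n = sum (count_list es) R" unfolding n_def using sum_count_set[OF setR finR] by simp
  also have "\<dots> = sum (\<lambda>_. M) R" using cntR by simp
  also have "\<dots> = d * M" using cardR by simp
  finally have nM: "n = d * M" .
  then have dvd: "d dvd n" by simp
  have qM: "n div d = M" using nM d by simp
  have cnt_es: "count (mset es) a = (if a \<in> R then M else 0)" for a
  proof (cases "a \<in> R")
    case True then show ?thesis using cntR by (simp add: count_mset)
  next
    case False then have "a \<notin> set es" using setR by auto
    then show ?thesis using False by (simp add: count_mset count_list_0_iff)
  qed
  have cnt_t: "count (mset (map (\<lambda>i. lam * w ^ (i div M)) [0..<n])) a = (if a \<in> R then M else 0)" for a
  proof -
    have idx: "i div M < d" if "i < n" for i using that nM M1
      by (metis less_mult_imp_div_less mult.commute)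
    show ?thesis
    proof (cases "a \<in> R")
      case True
      then obtain b0 where b0: "b0 < d" "a = lam * w ^ b0" unfolding R_def by auto
      have "{i\<in>{0..<n}. lam * w ^ (i div M) = a} = {i\<in>{0..<M*d}. i div M = b0}"
      proof (rule Set.set_eqI, rule iffI)
        fix i assume "i \<in> {i\<in>{0..<n}. lam * w ^ (i div M) = a}"
        then have i: "i < n" and e: "w ^ (i div M) = w ^ b0" using b0 lam0 by auto
        have "i div M = b0" using xi_inj[OF idx[OF i] b0(1)] e unfolding w_def by simp
        then show "i \<in> {i\<in>{0..<M*d}. i div M = b0}" using i nM by (simp add: mult.commute)
      next
        fix i assume "i \<in> {i\<in>{0..<M*d}. i div M = b0}"
        then show "i \<in> {i\<in>{0..<n}. lam * w ^ (i div M) = a}" using b0 nM by (auto simp: mult.commute)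
      qed
      then show ?thesis using True card_div_block[OF b0(1), of M] unfolding count_map_upt by simp
    next
      case False
      have "{i\<in>{0..<n}. lam * w ^ (i div M) = a} = {}"
        using False idx unfolding R_def by auto
      then show ?thesis using False unfolding count_map_upt by simp
    qed
  qed
  have "mset es = mset (map (\<lambda>i. lam * w ^ (i div M)) [0..<n])"
    by (rule multiset_eqI, simp only: cnt_es cnt_t)
  then show ?thesis using dvd qM unfolding lam_def n_def w_def by simp
qed
lemma lam_cond:
  fixes lam :: complex
  assumes n: "n = q * d" and d: "d > 0" and q: "q > 0"
    and L: "lam ^ n * cis (pi * real q * real (d - 1)) = 1"
  shows "(even (q * (d - 1)) \<longrightarrow> (\<exists>k::nat. lam = xi n ^ k)) \<and>
         (\<exists>\<mu>::complex. \<exists>k::nat. \<mu>\<^sup>2 = inverse (xi n ^ (q * (d - 1))) \<and> lam = \<mu> * xi n ^ k)"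
proof -
  define th where "th = pi * real q * real (d - 1)"
  have n1: "n \<ge> 1" using n d q by (simp add: Suc_le_eq)
  have Ln: "lam ^ n = cis (- th)" using L unfolding th_def
    by (metis cis_divide cis_zero diff_0 mult.commute nonzero_mult_div_cancel_left cis_neq_zero)
  define mu where "mu = cis (- th / real n)"
  have mun: "mu ^ n = cis (- th)" unfolding mu_def DeMoivre using n1 by simp
  have mu0: "mu \<noteq> 0" unfolding mu_def by simp
  have rq: "real (q * (d - 1)) = real q * real (d - 1)" by (simp only: of_nat_mult)
  have mu2: "mu\<^sup>2 = inverse (xi n ^ (q * (d - 1)))"
    unfolding mu_def DeMoivre xi_cis th_def rq cis_inverse by (rule arg_cong[of _ _ cis], simp add: field_simps)
  have "(lam / mu) ^ n = 1" using Ln mun mu0 by (simp add: power_divide)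
  from xi_root[OF n1 this] obtain k where "lam / mu = xi n ^ k" by auto
  then have lk: "lam = mu * xi n ^ k" using mu0 by (simp add: field_simps)
  have ev: "\<exists>k::nat. lam = xi n ^ k" if e: "even (q * (d - 1))"
  proof -
    from e obtain t where t: "q * (d - 1) = 2 * t" by (elim evenE)
    have "real q * real (d - 1) = 2 * real t" using arg_cong[OF t, of real] unfolding rq by simp
    then have "th = 2 * pi * real t" unfolding th_def by (simp add: algebra_simps)
    then have "cis (- th) = cis (- (2 * pi)) ^ t" by (simp add: DeMoivre algebra_simps)
    also have "cis (- (2 * pi)) = 1" by (simp add: complex_eq_iff)
    finally have "lam ^ n = 1" using Ln by simp
    from xi_root[OF n1 this] show ?thesis by auto
  qed
  show ?thesis using ev mu2 lk by blast
qed
lemma sum_div_blocks: "(\<Sum>i\<in>{0..<q*d}. i div q) = q * (\<Sum>b\<in>{0..<d}. (b::nat))" if "q > 0"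
proof (induct d)
  case (Suc d)
  have "{0..<q * Suc d} = {0..<q*d} \<union> {q*d..<q*d+q}" by (auto simp: algebra_simps)
  then have "(\<Sum>i\<in>{0..<q*Suc d}. i div q) = (\<Sum>i\<in>{0..<q*d}. i div q) + (\<Sum>i\<in>{q*d..<q*d+q}. i div q)"
    by (simp add: sum.union_disjoint ivl_disj_int)
  also have "(\<Sum>i\<in>{q*d..<q*d+q}. i div q) = (\<Sum>i\<in>{q*d..<q*d+q}. d)"
  proof (rule sum.cong)
    fix i assume "i \<in> {q*d..<q*d+q}"
    then show "i div q = d" using that by (auto intro!: div_nat_eqI simp: algebra_simps)
  qed simp
  finally show ?case using Suc by (simp add: algebra_simps)
qed simp

lemma gauss2: "2 * (\<Sum>b\<in>{0..<d}. (b::nat)) = d * (d - 1)"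
proof (induct d)
  case (Suc d)
  have "2 * (\<Sum>b\<in>{0..<Suc d}. b) = 2 * (\<Sum>b\<in>{0..<d}. b) + 2 * d" by simp
  also have "\<dots> = d * (d - 1) + 2 * d" using Suc by simp
  also have "\<dots> = Suc d * (Suc d - 1)" by (cases d, auto simp: algebra_simps)
  finally show ?case .
qed simp

lemma det_block: assumes n: "n = q * d" and d: "d > 0" and q: "q > 0"
  shows "det (lam \<cdot>\<^sub>m block_diag_roots n d) = lam ^ n * cis (pi * real q * real (d - 1))"
proof -
  define B where "B = block_diag_roots n d"
  have B: "B \<in> carrier_mat n n" unfolding B_def block_diag_roots_def by simp
  have qq: "n div d = q" using n d by simp
  have ut: "upper_triangular B" unfolding B_def block_diag_roots_def upper_triangular_def by auto
  have "det B = prod_list (diag_mat B)" by (rule det_upper_triangular[OF ut B])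
  also have "\<dots> = (\<Prod>i\<in>{0..<n}. B $$ (i,i))" using B by (simp add: prod_list_diag_prod)
  also have "\<dots> = (\<Prod>i\<in>{0..<n}. xi n ^ (q * (i div q)))" unfolding B_def block_diag_roots_def qq
    by (rule prod.cong, auto)
  also have "\<dots> = xi n ^ (\<Sum>i\<in>{0..<n}. q * (i div q))" by (simp add: power_sum)
  also have "(\<Sum>i\<in>{0..<n}. q * (i div q)) = q * (q * (\<Sum>b\<in>{0..<d}. b))"
    unfolding n by (simp add: sum_distrib_left[symmetric] sum_div_blocks[OF q])
  finally have dB: "det B = xi n ^ (q * (q * (\<Sum>b\<in>{0..<d}. b)))" .
  define S where "S = (\<Sum>b\<in>{0..<d}. b)"
  have S2: "2 * real S = real d * real (d - 1)" using arg_cong[OF gauss2[of d], of real] unfolding S_def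
    by (simp only: of_nat_mult of_nat_numeral)
  have "xi n ^ (q * (q * S)) = cis (2 * pi * (real q * (real q * real S)) / (real q * real d))"
    unfolding xi_cis n by simp
  also have "2 * pi * (real q * (real q * real S)) / (real q * real d) = pi * real q * (2 * real S) / real d"
    using q d by (simp add: field_simps)
  also have "\<dots> = pi * real q * real (d - 1)" unfolding S2 using d by (simp add: field_simps)
  finally have "det B = cis (pi * real q * real (d - 1))" using dB unfolding S_def by simp
  then show ?thesis using B unfolding B_def by simp
qed
lemma nth_root_exists: assumes "c \<noteq> (0::complex)" "n > 0" shows "\<exists>z. z ^ n = c"
proof -
  from bij_betw_nth_root_unity[OF assms] have "{z. z ^ n = c} = (\<lambda>z. (root n (norm c) * cis (Arg c / n)) * z) ` {z. z ^ n = 1}"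
    unfolding bij_betw_def by auto
  moreover have "(1::complex) \<in> {z. z ^ n = 1}" by simp
  ultimately show ?thesis by blast
qed

lemma smult_smult_mat: "a \<cdot>\<^sub>m (b \<cdot>\<^sub>m M) = (a * b :: complex) \<cdot>\<^sub>m M"
  by (intro eq_matI, auto)

lemma det_pow_mat: assumes A: "A \<in> carrier_mat n n" shows "det (A ^\<^sub>m k) = (det A :: complex) ^ k"
proof (induct k)
  case 0 then show ?case using A by simp
next
  case (Suc k)
  have "det (A ^\<^sub>m Suc k) = det (A ^\<^sub>m k * A)" by simp
  also have "\<dots> = det (A ^\<^sub>m k) * det A" by (rule det_mult[OF pow_carrier_mat[OF A] A])
  finally show ?case using Suc by simp
qed

lemma pow_rel: assumes A: "A \<in> carrier_mat n n" and B: "B \<in> carrier_mat n n"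
  and AB: "A * B = c \<cdot>\<^sub>m (B * A)"
  shows "A ^\<^sub>m j * B = (c ^ j :: complex) \<cdot>\<^sub>m (B * A ^\<^sub>m j)"
proof (induct j)
  case 0 then show ?case using A B by (intro eq_matI, auto)
next
  case (Suc j)
  have Aj: "A ^\<^sub>m j \<in> carrier_mat n n" using A by simp
  have "A ^\<^sub>m Suc j * B = A ^\<^sub>m j * (A * B)" using assoc_mult_mat[OF Aj A B] by simp
  also have "\<dots> = c \<cdot>\<^sub>m (A ^\<^sub>m j * B * A)"
    unfolding AB using mult_smult_distrib[OF Aj mult_carrier_mat[OF B A], of c] assoc_mult_mat[OF Aj B A] by simp
  also have "A ^\<^sub>m j * B * A = c ^ j \<cdot>\<^sub>m (B * A ^\<^sub>m j * A)"
    unfolding Suc using mult_smult_assoc_mat[OF mult_carrier_mat[OF B Aj] A, of "c ^ j"] by simp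
  also have "B * A ^\<^sub>m j * A = B * A ^\<^sub>m Suc j" using assoc_mult_mat[OF B Aj A] by simp
  finally show ?case by (simp add: smult_smult_mat)
qed

lemma nonzero_entry: assumes h: "h \<in> carrier_mat n n" and dh: "det h \<noteq> (0::complex)" and n: "n \<ge> 1"
  shows "\<exists>i j. i < n \<and> j < n \<and> h $$ (i,j) \<noteq> 0"
proof (rule ccontr)
  assume "\<not> ?thesis"
  then have "h = 0\<^sub>m n n" using h by (intro eq_matI, auto)
  then have "det h = 0" using n by simp
  with dh show False by simp
qed

lemma xi_pow_q: assumes "n = q * d" "q > 0" shows "xi n ^ q = xi d"
proof -
  have "xi n ^ q = cis (2 * pi * real q / real n)" by (rule xi_cis)
  also have "\<dots> = cis (2 * pi * real 1 / real d)" using assms by simp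
  also have "\<dots> = xi d ^ 1" by (rule xi_cis[symmetric])
  finally show ?thesis by simp
qed
lemma one_smult_mat'[simp]: "(1::complex) \<cdot>\<^sub>m A = A" by (intro eq_matI, auto)

lemma conj_cancel: assumes P: "P \<in> carrier_mat n n" and Q: "Q \<in> carrier_mat n n" and X: "X \<in> carrier_mat n n"
  and QP: "Q * P = 1\<^sub>m n" shows "Q * (P * X * Q) * P = (X :: complex mat)"
proof -
  have "Q * (P * X * Q) * P = (Q * P) * X * (Q * P)"
    using P Q X by (simp add: assoc_mult_mat[of _ n n _ n _ n])
  then show ?thesis using QP X by simp
qed

lemma count_fst1: "\<forall>p\<in>set n_as. fst p = 1 \<Longrightarrow> sum_list (map fst (filter (\<lambda>na. snd na = a) n_as)) = count_list (map snd n_as) a"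
  by (induct n_as, auto)

lemma len_fst1: "\<forall>p\<in>set n_as. fst p = 1 \<Longrightarrow> sum_list (map fst n_as) = length n_as"
  by (induct n_as, auto)

theorem mainTheorem2:
  fixes n d :: nat and H :: "complex mat set" and u :: "complex mat"
  assumes "n \<ge> 1"
    and "subgroup_SL n H"
    and "irreducible_SL n H"
    and "u \<in> U n H"
    and "proj_order n u d"
  shows "d dvd n \<and>
    (\<exists>P \<in> SL n. \<exists>lam::complex. lam \<noteq> 0 \<and>
        u = P * (lam \<cdot>\<^sub>m block_diag_roots n d) * minv P \<and>
        ((odd d \<or> (even d \<and> even (n div d))) \<longrightarrow> (\<exists>k::nat. lam = xi n ^ k)) \<and>
        ((even d \<and> odd (n div d)) \<longrightarrow>
           (\<exists>\<mu>::complex. \<exists>k::nat. \<mu>\<^sup>2 = inverse (xi n ^ ((n div d) * (d - 1))) \<and>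
                           lam = \<mu> * xi n ^ k)))"
proof -
  note n1 = assms(1)
  have uc: "u \<in> carrier_mat n n" and du: "det u = 1" and ucomm: "\<forall>h\<in>H. commutator u h \<in> centre_SL n"
    using assms(4) unfolding U_def SL_def by auto
  have Hc: "H \<subseteq> carrier_mat n n" and dH: "\<And>h. h \<in> H \<Longrightarrow> det h = 1" and H1: "1\<^sub>m n \<in> H"
    and Hmul: "\<And>a b. a \<in> H \<Longrightarrow> b \<in> H \<Longrightarrow> a * b \<in> H"
    using assms(2) unfolding subgroup_SL_def SL_def by auto
  have d0: "d > 0" and ud: "u ^\<^sub>m d \<in> centre_SL n" and umin: "\<And>e. 0 < e \<Longrightarrow> e < d \<Longrightarrow> u ^\<^sub>m e \<notin> centre_SL n"
    using assms(5) unfolding proj_order_def by auto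
  obtain m0 where ud': "u ^\<^sub>m d = xi n ^ m0 \<cdot>\<^sub>m 1\<^sub>m n" using ud unfolding centre_SL_def by auto
  define s where "s = xi n ^ m0"
  have s0: "s \<noteq> 0" unfolding s_def by simp
  have ud: "u ^\<^sub>m d = s \<cdot>\<^sub>m 1\<^sub>m n" using ud' s_def by simp
  have rel: "\<exists>c. u * h = c \<cdot>\<^sub>m (h * u)" if h: "h \<in> H" for h
  proof -
    from ucomm h obtain k where "commutator u h = xi n ^ k \<cdot>\<^sub>m 1\<^sub>m n" unfolding centre_SL_def by auto
    from comm_rel[OF uc _ _ _ this] h Hc dH du show ?thesis by auto
  qed
  have central: "u ^\<^sub>m j \<in> centre_SL n" if cm: "\<forall>h\<in>H. u ^\<^sub>m j * h = h * u ^\<^sub>m j" for j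
  proof -
    from schur[OF n1 assms(3) Hc pow_carrier_mat[OF uc] cm] obtain a where a: "u ^\<^sub>m j = a \<cdot>\<^sub>m 1\<^sub>m n" by auto
    have "1 = det (u ^\<^sub>m j)" using det_pow_mat[OF uc] du by simp
    also have "\<dots> = a ^ n" unfolding a by simp
    finally have "a ^ n = 1" by simp
    from xi_root[OF n1 this] obtain k where "a = xi n ^ k" by auto
    then show ?thesis unfolding centre_SL_def a by auto
  qed
  define Om where "Om = {c. \<exists>h\<in>H. u * h = c \<cdot>\<^sub>m (h * u)}"
  have Om_d: "c ^ d = 1" if c: "c \<in> Om" for c
  proof -
    from c obtain h where h: "h \<in> H" "u * h = c \<cdot>\<^sub>m (h * u)" unfolding Om_def by auto
    have hc: "h \<in> carrier_mat n n" using h Hc by auto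
    have e1: "h * (s \<cdot>\<^sub>m 1\<^sub>m n) = s \<cdot>\<^sub>m h" using mult_smult_distrib[OF hc one_carrier_mat] hc by simp
    have e2: "(s \<cdot>\<^sub>m 1\<^sub>m n) * h = s \<cdot>\<^sub>m h" using mult_smult_assoc_mat[OF one_carrier_mat hc] hc by simp
    from pow_rel[OF uc hc h(2), of d] have eq: "s \<cdot>\<^sub>m h = c ^ d \<cdot>\<^sub>m (s \<cdot>\<^sub>m h)"
      unfolding ud e1 e2 .
    obtain i j where ij: "i < n" "j < n" "h $$ (i,j) \<noteq> 0" using nonzero_entry[OF hc _ n1] dH[OF h(1)] by auto
    have "(s \<cdot>\<^sub>m h) $$ (i,j) = (c ^ d \<cdot>\<^sub>m (s \<cdot>\<^sub>m h)) $$ (i,j)" using eq by simp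
    then have "s * h $$ (i,j) = c ^ d * (s * h $$ (i,j))" using hc ij by simp
    then show ?thesis using s0 ij(3) by simp
  qed
  have Om_mul: "c1 * c2 \<in> Om" if "c1 \<in> Om" "c2 \<in> Om" for c1 c2
  proof -
    from that obtain h1 h2 where h: "h1 \<in> H" "u * h1 = c1 \<cdot>\<^sub>m (h1 * u)" "h2 \<in> H" "u * h2 = c2 \<cdot>\<^sub>m (h2 * u)"
      unfolding Om_def by auto
    have h1c: "h1 \<in> carrier_mat n n" and h2c: "h2 \<in> carrier_mat n n" using h Hc by auto
    have "u * (h1 * h2) = (u * h1) * h2" using assoc_mult_mat[OF uc h1c h2c] by simp
    also have "\<dots> = c1 \<cdot>\<^sub>m (h1 * (u * h2))" unfolding h(2)
      using mult_smult_assoc_mat[OF mult_carrier_mat[OF h1c uc] h2c] assoc_mult_mat[OF h1c uc h2c] by simp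
    also have "\<dots> = c1 \<cdot>\<^sub>m (c2 \<cdot>\<^sub>m (h1 * (h2 * u)))" unfolding h(4)
      using mult_smult_distrib[OF h1c mult_carrier_mat[OF h2c uc]] by simp
    also have "\<dots> = (c1 * c2) \<cdot>\<^sub>m ((h1 * h2) * u)" using assoc_mult_mat[OF h1c h2c uc] by (simp add: smult_smult_mat)
    finally show ?thesis unfolding Om_def using Hmul[OF h(1) h(3)] by auto
  qed
  have Om_1: "1 \<in> Om" unfolding Om_def using H1 uc by (intro CollectI bexI[of _ "1\<^sub>m n"], auto)
  have Om_pow: "c ^ k \<in> Om" if "c \<in> Om" for c k
    by (induct k, insert Om_1 Om_mul that, auto simp: mult.commute)
  define w where "w = xi d"
  have wd: "w ^ d = 1" unfolding w_def using d0 xi_pow_n[of d] by simp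
  have Om_w: "\<exists>b<d. c = w ^ b" if "c \<in> Om" for c
    using xi_root[of d c] Om_d[OF that] d0 unfolding w_def by auto
  define g where "g = (LEAST g. 0 < g \<and> w ^ g \<in> Om)"
  have ex: "0 < d \<and> w ^ d \<in> Om" using d0 wd Om_1 by simp
  have g: "0 < g" "w ^ g \<in> Om" using LeastI[of "\<lambda>g. 0 < g \<and> w ^ g \<in> Om", OF ex] unfolding g_def by auto
  have gmin: "\<And>g'. 0 < g' \<Longrightarrow> w ^ g' \<in> Om \<Longrightarrow> g \<le> g'" unfolding g_def by (simp add: Least_le)
  have gdvd: "g dvd b" if "w ^ b \<in> Om" for b
  proof -
    have wg: "(w ^ g) ^ d = 1" using wd by (metis power_mult mult.commute power_one)
    have "w ^ (b mod g) = w ^ (b mod g) * ((w ^ g) ^ d) ^ (b div g)" using wg by simp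
    also have "\<dots> = w ^ (b mod g) * (w ^ g) ^ (b div g) * (w ^ g) ^ ((d - 1) * (b div g))"
    proof -
      have kk: "b div g + (d - 1) * (b div g) = d * (b div g)" using d0 by (cases d) auto
      have "(w ^ g) ^ (b div g) * (w ^ g) ^ ((d - 1) * (b div g)) = ((w ^ g) ^ d) ^ (b div g)"
      proof -
        have "(w ^ g) ^ (b div g) * (w ^ g) ^ ((d - 1) * (b div g)) = (w ^ g) ^ (b div g + (d - 1) * (b div g))"
          by (rule power_add[symmetric])
        also have "\<dots> = (w ^ g) ^ (d * (b div g))" unfolding kk ..
        also have "\<dots> = ((w ^ g) ^ d) ^ (b div g)" by (rule power_mult)
        finally show ?thesis .
      qed
      then show ?thesis by (simp add: mult.assoc)
    qed
    also have "w ^ (b mod g) * (w ^ g) ^ (b div g) = w ^ b"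
      by (metis power_add power_mult div_mult_mod_eq add.commute mult.commute)
    finally have "w ^ (b mod g) \<in> Om" using Om_mul[OF that Om_pow[OF g(2)]] by simp
    with gmin[of "b mod g"] g(1) have "b mod g = 0" using mod_less_divisor[OF g(1), of b] by fastforce
    then show ?thesis by auto
  qed
  have "g = 1"
  proof (rule ccontr)
    assume g1: "g \<noteq> 1"
    have gd: "g dvd d" using gdvd ex by auto
    define j where "j = d div g"
    have j: "0 < j" "j < d" using gd g(1) g1 d0 unfolding j_def
      by (auto simp: dvd_div_eq_0_iff)
    have "u ^\<^sub>m j * h = h * u ^\<^sub>m j" if h: "h \<in> H" for h
    proof -
      from rel[OF h] obtain c where c: "u * h = c \<cdot>\<^sub>m (h * u)" by auto
      then have cO: "c \<in> Om" unfolding Om_def using h by auto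
      from Om_w[OF cO] obtain b where b: "c = w ^ b" by auto
      from gdvd cO b obtain t where t: "b = g * t" by auto
      have "c ^ j = 1" unfolding b t j_def using gd wd
        by (metis power_mult mult.commute dvd_mult_div_cancel power_one mult.assoc)
      with pow_rel[OF uc _ c, of j] h Hc show ?thesis by auto
    qed
    then have "u ^\<^sub>m j \<in> centre_SL n" using central by auto
    with umin[OF j] show False by simp
  qed
  with g have wO: "w \<in> Om" by simp
  then obtain h0 where h0: "h0 \<in> H" "u * h0 = w \<cdot>\<^sub>m (h0 * u)" unfolding Om_def by auto
  have h0c: "h0 \<in> carrier_mat n n" using h0 Hc by auto
  have dh0: "det h0 \<noteq> 0" using dH[OF h0(1)] by simp
  note h0i = minv_props[OF h0c dh0]
  have w0: "w \<noteq> 0" unfolding w_def by simp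
  have sim: "similar_mat u (w \<cdot>\<^sub>m u)"
  proof (rule similar_matI[where n=n and P=h0 and Q="minv h0"])
    show "{u, w \<cdot>\<^sub>m u, h0, minv h0} \<subseteq> carrier_mat n n" using uc h0c h0i by auto
    show "h0 * minv h0 = 1\<^sub>m n" "minv h0 * h0 = 1\<^sub>m n" using h0i by auto
    have "h0 * (w \<cdot>\<^sub>m u) = u * h0" using h0(2) mult_smult_distrib[OF h0c uc] by simp
    then have "h0 * (w \<cdot>\<^sub>m u) * minv h0 = u * (h0 * minv h0)"
      using assoc_mult_mat[OF uc h0c h0i(1)] by simp
    then show "u = h0 * (w \<cdot>\<^sub>m u) * minv h0" using h0i uc by simp
  qed
  have cp: "char_poly u = char_poly (w \<cdot>\<^sub>m u)" by (rule char_poly_similar[OF sim])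
  have ord: "order (a * w) (char_poly u) = order a (char_poly u)" for a
    using order_char_poly_smult[OF uc w0, of "a*w"] cp w0 by simp
  from char_poly_factorized[OF uc] obtain as where "char_poly u = (\<Prod>a\<leftarrow>as. [:- a, 1:])" by auto
  from jordan_nf_exists[OF uc this] obtain n_as where jnf: "jordan_nf u n_as" by auto
  let ?J = "jordan_matrix n_as"
  from jnf have simJ: "similar_mat u ?J" and nz: "0 \<notin> fst ` set n_as" unfolding jordan_nf_def by auto
  from simJ obtain P0 Q0 where wit: "similar_mat_wit u ?J P0 Q0" unfolding similar_mat_def by auto
  note wd0 = similar_mat_witD2[OF uc wit]
  have "dim_row ?J = n" using wd0(5) by (rule carrier_matD)
  then have sl: "sum_list (map fst n_as) = n" by (simp only: jordan_matrix_dim)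
  have "u ^\<^sub>m d = P0 * ?J ^\<^sub>m d * Q0" by (rule similar_mat_wit_pow_id[OF wit])
  then have "Q0 * (u ^\<^sub>m d) * P0 = ?J ^\<^sub>m d"
    using conj_cancel[OF wd0(6) wd0(7) pow_carrier_mat[OF wd0(5)] wd0(2)] by simp
  moreover have "Q0 * (u ^\<^sub>m d) * P0 = s \<cdot>\<^sub>m 1\<^sub>m n" unfolding ud
    using wd0 mult_smult_distrib[OF wd0(7) one_carrier_mat] mult_smult_assoc_mat[OF wd0(7) wd0(6)] by simp
  ultimately have Jd: "?J ^\<^sub>m d = s \<cdot>\<^sub>m 1\<^sub>m (sum_list (map fst n_as))" unfolding sl by simp
  from jm_pow[OF Jd s0 d0] nz have blocks: "\<forall>(k,a)\<in>set n_as. k = 1 \<and> a ^ d = s"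
    by (force)
  then have f1: "\<forall>p\<in>set n_as. fst p = 1" by auto
  define es where "es = map snd n_as"
  have Jdiag: "?J = diagm es" unfolding es_def by (rule jm_diag[OF f1])
  have les: "length es = n" using len_fst1[OF f1] sl unfolding es_def by simp
  have cnt: "count_list es a = order a (char_poly u)" for a
    unfolding jordan_nf_order[OF jnf] count_fst1[OF f1] es_def ..
  have rot: "\<forall>a. count_list es (a * xi d) = count_list es a" using ord unfolding cnt w_def by simp
  have roots: "\<forall>a\<in>set es. a ^ d = s" using blocks unfolding es_def by auto
  have ne: "es \<noteq> []" using les n1 by auto
  from counting[OF d0 ne s0 roots rot] les
  have dn: "d dvd n" and ms: "mset es = mset (map (\<lambda>i. es ! 0 * xi d ^ (i div (n div d))) [0..<n])" by auto
  define q where "q = n div d"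
  define lam where "lam = es ! 0"
  have nq: "n = q * d" using dn unfolding q_def by simp
  have q0: "q > 0" using nq n1 by (cases q, auto)
  have lam0: "lam \<noteq> 0" using roots ne s0 d0 unfolding lam_def by (cases es, auto simp: zero_power)
  have "diagm (map (\<lambda>i. lam * xi d ^ (i div q)) [0..<n]) = lam \<cdot>\<^sub>m block_diag_roots n d"
    unfolding diagm_def block_diag_roots_def q_def[symmetric] xi_pow_q[OF nq q0, symmetric]
    by (intro eq_matI, auto simp: power_mult)
  with diagm_perm[OF ms[folded lam_def q_def]] Jdiag simJ
  have simL: "similar_mat u (lam \<cdot>\<^sub>m block_diag_roots n d)" using similar_mat_trans by metis
  let ?B = "lam \<cdot>\<^sub>m block_diag_roots n d"
  from simL obtain P Q where wit2: "similar_mat_wit u ?B P Q" unfolding similar_mat_def by auto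
  note w2 = similar_mat_witD2[OF uc wit2]
  have dPQ: "det P * det Q = 1" using det_mult[OF w2(6) w2(7)] w2(1) by simp
  have dP0: "det P \<noteq> 0" using dPQ by auto
  obtain c where c: "c ^ n = inverse (det P)" using nth_root_exists[of "inverse (det P)" n] dP0 n1 by auto
  have c0: "c \<noteq> 0" using c dP0 n1 by (cases "c = 0", auto simp: zero_power)
  define P' where "P' = c \<cdot>\<^sub>m P"
  define Q' where "Q' = inverse c \<cdot>\<^sub>m Q"
  have P'c: "P' \<in> carrier_mat n n" and Q'c: "Q' \<in> carrier_mat n n" unfolding P'_def Q'_def using w2 by auto
  have dP': "det P' = 1" unfolding P'_def using w2(6) c dP0 by simp
  have P'Q': "P' * Q' = 1\<^sub>m n" unfolding P'_def Q'_def
    using mult_smult_assoc_mat[OF w2(6) smult_carrier_mat[OF w2(7)], of c "inverse c"]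
      mult_smult_distrib[OF w2(6) w2(7), of "inverse c"] w2(1) c0 by (simp add: smult_smult_mat)
  have uP: "u = P' * ?B * Q'"
  proof -
    have "P' * ?B * Q' = (c * inverse c) \<cdot>\<^sub>m (P * ?B * Q)" unfolding P'_def Q'_def
      using mult_smult_assoc_mat[OF w2(6) w2(5), of c] mult_smult_distrib[OF mult_carrier_mat[OF w2(6) w2(5)] w2(7), of "inverse c"]
        mult_smult_assoc_mat[OF mult_carrier_mat[OF w2(6) w2(5)] smult_carrier_mat[OF w2(7)], of c "inverse c"]
      by (simp add: smult_smult_mat)
    then show ?thesis using w2(3) c0 by simp
  qed
  have mP: "minv P' = Q'" by (rule minv_eq[OF P'c Q'c P'Q'])
  have P'SL: "P' \<in> SL n" unfolding SL_def using P'c dP' by auto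
  obtain X where X: "X = det ?B" by simp
  have "det u = det P * X * det Q" unfolding w2(3) X
    using det_mult[OF mult_carrier_mat[OF w2(6) w2(5)] w2(7)] det_mult[OF w2(6) w2(5)] by presburger
  then have "X * (det P * det Q) = 1" using du by (simp add: algebra_simps)
  then have detB: "det ?B = 1" using dPQ X by simp
  from det_block[OF nq d0 q0, of lam] detB have L: "lam ^ n * cis (pi * real q * real (d - 1)) = 1" by simp
  from lam_cond[OF nq d0 q0 L] have LC: "even (q * (d - 1)) \<longrightarrow> (\<exists>k::nat. lam = xi n ^ k)"
    "\<exists>\<mu>::complex. \<exists>k::nat. \<mu>\<^sup>2 = inverse (xi n ^ (q * (d - 1))) \<and> lam = \<mu> * xi n ^ k" by auto
  have par: "odd d \<or> (even d \<and> even q) \<Longrightarrow> even (q * (d - 1))" using d0 by auto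
  show ?thesis
    using dn P'SL lam0 uP mP LC par unfolding q_def[symmetric] by auto
qed
end
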